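(* Let $U(y)=\sum_{k\in\mathbb Z^m_+,\ \max_jk_j\le n}c_ky^k$ be a polynomial in $m$ variables with complex coefficients of degree at most $n$ in each variable. (a) If $0<A<B$, then $$\sum_k|c_k|\le\Big[T_n\Big(\frac{B+A+2}{B-A}\Big)\Big]^m\|U\|_{C([A,B]^m)}.$$ (b) If $b>0$, then $$\sum_k|c_k|\le\Big(\frac{e^{b/4}+e^{-b/4}}{e^{b/4}-e^{-b/4}}\Big)^{mn}\|U\|_{C([e^{-b},e^b]^m)}.$$
   Context: $T_n(u)=\frac12((u+\sqrt{u^2-1})^n+(u-\sqrt{u^2-1})^n)$ is the Chebyshev polynomial of the first kind; $[A,B]^m$ is the cube $\{y\in\mathbb R^m:A\le y_j\le B\ \forall j\}$; $y^k=\prod_jy_j^{k_j}$; $\|U\|_{C(S)}=\max_S|U|$. *)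

theory Defs
  imports "HOL-Analysis.Analysis"
begin

text \<open>Chebyshev polynomial of the first kind, via the closed formula from the paper
  (valid for real arguments u \<ge> 1, which is the only range used).\<close>
definition cheb_T :: "nat \<Rightarrow> real \<Rightarrow> real" where
  "cheb_T n u = ((u + sqrt (u^2 - 1)) ^ n + (u - sqrt (u^2 - 1)) ^ n) / 2"

definition multi_idx :: "nat \<Rightarrow> nat \<Rightarrow> (nat \<Rightarrow> nat) set" where
  "multi_idx m n = PiE {..<m} (\<lambda>_. {..n})"

definition mpoly_eval :: "nat \<Rightarrow> nat \<Rightarrow> ((nat \<Rightarrow> nat) \<Rightarrow> complex) \<Rightarrow> (nat \<Rightarrow> real) \<Rightarrow> complex" where
  "mpoly_eval m n c y = (\<Sum>k\<in>multi_idx m n. c k * (\<Prod>j<m. complex_of_real (y j ^ k j)))"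

definition cube :: "nat \<Rightarrow> real \<Rightarrow> real \<Rightarrow> (nat \<Rightarrow> real) set" where
  "cube m A B = PiE {..<m} (\<lambda>_. {A..B})"

definition sup_norm :: "((nat \<Rightarrow> real) \<Rightarrow> complex) \<Rightarrow> (nat \<Rightarrow> real) set \<Rightarrow> real" where
  "sup_norm U S = Sup ((\<lambda>y. cmod (U y)) ` S)"

end

theory Submission
  imports Defs "HOL-Computational_Algebra.Polynomial"
begin

definition lag :: "(nat \<Rightarrow> real) \<Rightarrow> nat \<Rightarrow> nat \<Rightarrow> real poly" where
  "lag x n i = smult (\<Prod>j\<in>{..n}-{i}. 1/(x i - x j)) (\<Prod>j\<in>{..n}-{i}. [:- x j, 1:])"

lemma poly_lag: "poly (lag x n i) t = (\<Prod>j\<in>{..n}-{i}. (t - x j)/(x i - x j))"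
  by (simp add: lag_def poly_prod prod.distrib[symmetric] field_simps)

lemma degree_lag: assumes "i \<le> n" shows "degree (lag x n i) \<le> n"
proof -
  have "degree (\<Prod>j\<in>{..n}-{i}. [:- x j, 1:]) \<le> (\<Sum>j\<in>{..n}-{i}. degree [:- x j, 1:])"
    using degree_prod_sum_le[of "{..n}-{i}" "\<lambda>j. [:- x j, 1:]"] by (simp add: o_def)
  also have "\<dots> \<le> n" by (use assms in \<open>auto simp: card_Diff_subset\<close>)
  finally show ?thesis unfolding lag_def
    using degree_smult_le order_trans by blast
qed

lemma poly_lag_node:
  assumes "inj_on x {..n}" "i \<le> n" "k \<le> n"
  shows "poly (lag x n i) (x k) = (if k = i then 1 else 0)"
proof (cases "k = i")
  case True
  have "poly (lag x n i) (x k) = (\<Prod>j\<in>{..n}-{i}. 1)" unfolding poly_lag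
    apply (rule prod.cong[OF refl]) using assms True by (auto simp: inj_on_def)
  then show ?thesis using True by simp
next
  case False
  have "poly (lag x n i) (x k) = 0" unfolding poly_lag
    apply (rule prod_zero) using assms False by (auto intro!: bexI[of _ k])
  then show ?thesis using False by simp
qed

lemma lag_interp:
  assumes "inj_on x {..n}" "degree p \<le> n"
  shows "p = (\<Sum>i\<le>n. smult (poly p (x i)) (lag x n i))"
proof (rule poly_eqI_degree[where A = "x ` {..n}"])
  have c: "card (x ` {..n}) = Suc n" using assms(1) by (simp add: card_image)
  show "degree p < card (x ` {..n})" using c assms by simp
  have "degree (\<Sum>i\<le>n. smult (poly p (x i)) (lag x n i)) \<le> n"
    by (rule degree_sum_le) (auto intro: order_trans[OF degree_smult_le] degree_lag)
  then show "degree (\<Sum>i\<le>n. smult (poly p (x i)) (lag x n i)) < card (x ` {..n})" using c by simp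
  fix t assume "t \<in> x ` {..n}"
  then obtain k where k: "k \<le> n" "t = x k" by auto
  have "poly (\<Sum>i\<le>n. smult (poly p (x i)) (lag x n i)) t = (\<Sum>i\<le>n. poly p (x i) * (if k = i then 1 else 0))"
    unfolding poly_sum poly_smult k(2) using poly_lag_node[OF assms(1) _ k(1)] by (intro sum.cong) auto
  also have "\<dots> = poly p t" using k by (simp add: if_distrib[of "\<lambda>z. poly p (x _) * z"] sum.delta' cong: if_cong)
  finally show "poly p t = poly (\<Sum>i\<le>n. smult (poly p (x i)) (lag x n i)) t" by simp
qed

lemma poly_sum_N:
  fixes q :: "real poly"
  assumes "degree q \<le> N"
  shows "poly q t = (\<Sum>l\<le>N. coeff q l * t ^ l)"
proof -
  have "poly q t = poly (\<Sum>i\<le>N. monom (coeff q i) i) t" using poly_as_sum_of_monoms'[OF assms] by simp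
  also have "\<dots> = (\<Sum>l\<le>N. coeff q l * t ^ l)" unfolding poly_sum by (rule sum.cong[OF refl], rule poly_monom)
  finally show ?thesis .
qed

lemma alt_step:
  fixes q :: "real poly"
  assumes "\<forall>l. 0 \<le> s * (-1)^l * coeff q l" "c \<ge> 0"
  shows "\<forall>l. 0 \<le> (-s) * (-1)^l * coeff (q * [:-c,1:]) l"
proof
  fix l
  have e: "coeff (q * [:-c,1:]) l = - c * coeff q l + (case l of 0 \<Rightarrow> 0 | Suc m \<Rightarrow> coeff q m)"
    by (simp add: coeff_pCons)
  show "0 \<le> (-s) * (-1)^l * coeff (q * [:-c,1:]) l"
  proof (cases l)
    case 0
    then show ?thesis using assms(1)[rule_format, of 0] assms(2) e
      by (simp add: mult.left_commute[of s] mult_nonneg_nonneg)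
  next
    case (Suc m)
    have "(-s) * (-1)^l * coeff (q * [:-c,1:]) l = c * (s * (-1)^l * coeff q l) + s * (-1)^m * coeff q m"
      using e Suc by (simp add: algebra_simps)
    then show ?thesis using assms(1)[rule_format, of l] assms(1)[rule_format, of m] assms(2) by simp
  qed
qed

lemma alt_prod:
  fixes y :: "nat \<Rightarrow> real"
  assumes "finite S" "\<forall>j\<in>S. y j \<ge> 0"
  shows "\<forall>l. 0 \<le> (-1)^(card S) * (-1)^l * coeff (\<Prod>j\<in>S. [:-y j,1:]) l"
  using assms
proof (induction S rule: finite_induct)
  case empty
  show ?case by (auto simp: coeff_1)
next
  case (insert a F)
  have "\<forall>l. 0 \<le> (-((-1)^(card F))) * (-1)^l * coeff ((\<Prod>j\<in>F. [:-y j,1:]) * [:-y a,1:]) l"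
    by (rule alt_step) (use insert in auto)
  then show ?case using insert by (simp add: mult.commute)
qed

lemma alt_sum:
  fixes q :: "real poly"
  assumes "\<bar>\<sigma>\<bar> = 1" "\<forall>l. 0 \<le> \<sigma> * (-1)^l * coeff q l" "degree q \<le> N"
  shows "(\<Sum>l\<le>N. \<bar>coeff q l\<bar>) = \<bar>poly q (-1)\<bar>"
proof -
  have "\<bar>coeff q l\<bar> = \<sigma> * ((-1)^l * coeff q l)" for l
  proof -
    have "\<bar>coeff q l\<bar> = \<bar>\<sigma> * (-1)^l * coeff q l\<bar>" using assms(1) by (simp add: abs_mult power_abs)
    also have "\<dots> = \<sigma> * (-1)^l * coeff q l" using assms(2) by simp
    finally show ?thesis by simp
  qed
  then have "(\<Sum>l\<le>N. \<bar>coeff q l\<bar>) = \<sigma> * (\<Sum>l\<le>N. coeff q l * (-1)^l)"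
    by (simp add: sum_distrib_left mult.commute)
  also have "\<dots> = \<sigma> * poly q (-1)" using poly_sum_N[OF assms(3)] by simp
  finally have *: "(\<Sum>l\<le>N. \<bar>coeff q l\<bar>) = \<sigma> * poly q (-1)" .
  have "\<bar>\<sigma> * poly q (-1)\<bar> = \<bar>poly q (-1)\<bar>" using assms(1) by (simp add: abs_mult)
  moreover have "0 \<le> (\<Sum>l\<le>N. \<bar>coeff q l\<bar>)" by (rule sum_nonneg) simp
  ultimately show ?thesis using * by simp
qed

lemma alt_lag:
  fixes y :: "nat \<Rightarrow> real"
  assumes "\<forall>j\<le>n. y j \<ge> 0" and that: "i \<le> n" "n \<le> N"
  shows "(\<Sum>l\<le>N. \<bar>coeff (lag y n i) l\<bar>) = \<bar>poly (lag y n i) (-1)\<bar>"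
proof -
  define e where "e = (\<Prod>j\<in>{..n}-{i}. 1/(y i - y j))"
  define \<sigma> :: real where "\<sigma> = (if e \<ge> 0 then 1 else -1) * (-1)^(card ({..n}-{i}))"
  have a: "\<forall>l. 0 \<le> (-1)^(card ({..n}-{i})) * (-1)^l * coeff (\<Prod>j\<in>{..n}-{i}. [:-y j,1:]) l"
    by (rule alt_prod) (use assms in auto)
  have "\<forall>l. 0 \<le> \<sigma> * (-1)^l * coeff (lag y n i) l"
  proof
    fix l
    have "\<sigma> * (-1)^l * coeff (lag y n i) l = \<bar>e\<bar> * ((-1)^(card ({..n}-{i})) * (-1)^l * coeff (\<Prod>j\<in>{..n}-{i}. [:-y j,1:]) l)"
      unfolding \<sigma>_def lag_def e_def[symmetric] by (auto simp: coeff_smult)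
    moreover have "0 \<le> \<bar>e\<bar> * ((-1)^(card ({..n}-{i})) * (-1)^l * coeff (\<Prod>j\<in>{..n}-{i}. [:-y j,1:]) l)"
      by (rule mult_nonneg_nonneg) (use a in auto)
    ultimately show "0 \<le> \<sigma> * (-1)^l * coeff (lag y n i) l" by linarith
  qed
  moreover have "\<bar>\<sigma>\<bar> = 1" by (simp add: \<sigma>_def abs_mult power_abs)
  ultimately show ?thesis using alt_sum degree_lag[OF that(1)] that(2) by (meson order_trans)
qed

fun chebp :: "nat \<Rightarrow> real poly" where
  "chebp 0 = 1"
| "chebp (Suc 0) = [:0,1:]"
| "chebp (Suc (Suc n)) = [:0,2:] * chebp (Suc n) - chebp n"

lemma degree_chebp: "degree (chebp n) \<le> n"
proof (induction n rule: chebp.induct)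
  case (3 n)
  have "degree ([:0,2:] * chebp (Suc n)) \<le> Suc (Suc n)"
    using degree_mult_le[of "[:0,2:]" "chebp (Suc n)"] 3 by simp
  then show ?case using degree_diff_le[of "[:0,2:] * chebp (Suc n)" "Suc (Suc n)" "chebp n"] 3 by simp
qed auto

lemma poly_chebp_cos: "poly (chebp n) (cos t) = cos (real n * t)"
proof (induction n rule: chebp.induct)
  case (3 n)
  have "cos (real (Suc (Suc n)) * t) = 2 * cos t * cos (real (Suc n) * t) - cos (real n * t)"
  proof -
    have "cos (real (Suc (Suc n)) * t) = cos (real (Suc n) * t + t)" by (simp add: algebra_simps)
    moreover have "cos (real n * t) = cos (real (Suc n) * t - t)" by (simp add: algebra_simps)
    ultimately show ?thesis by (simp add: cos_add cos_diff)
  qed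
  then show ?case using 3 by simp
qed auto

lemma pow_rec:
  fixes z w :: real
  assumes "z^2 = 2*w*z - 1"
  shows "z^(Suc (Suc n)) = 2*w*z^(Suc n) - z^n"
proof -
  have "z^(Suc (Suc n)) = z^n * z^2" by (simp add: power2_eq_square)
  also have "\<dots> = z^n * (2*w*z - 1)" by (simp only: assms)
  also have "\<dots> = 2*w*z^(Suc n) - z^n" by (simp add: algebra_simps)
  finally show ?thesis .
qed

lemma poly_chebp_closed:
  assumes "w^2 \<ge> 1"
  shows "poly (chebp n) w = cheb_T n w"
proof -
  define s where "s = sqrt (w^2 - 1)"
  have s2: "s^2 = w^2 - 1" using assms by (simp add: s_def)
  have a: "(w+s)^2 = 2*w*(w+s) - 1" using s2 by (simp add: power2_eq_square algebra_simps)
  have b: "(w-s)^2 = 2*w*(w-s) - 1" using s2 by (simp add: power2_eq_square algebra_simps)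
  have ct: "cheb_T n w = ((w+s)^n + (w-s)^n)/2" for n by (simp add: cheb_T_def s_def)
  show ?thesis
  proof (induction n rule: chebp.induct)
    case 1 then show ?case by (simp add: ct)
  next
    case 2 then show ?case by (simp add: ct)
  next
    case (3 n)
    have "poly (chebp (Suc (Suc n))) w = 2*w*poly (chebp (Suc n)) w - poly (chebp n) w" by simp
    also have "\<dots> = 2*w*(((w+s)^Suc n + (w-s)^Suc n)/2) - ((w+s)^n + (w-s)^n)/2" using 3 by (simp only: ct)
    also have "\<dots> = ((2*w*(w+s)^Suc n - (w+s)^n) + (2*w*(w-s)^Suc n - (w-s)^n))/2" by argo
    also have "\<dots> = cheb_T (Suc (Suc n)) w" unfolding ct pow_rec[OF a, of n, symmetric] pow_rec[OF b, of n, symmetric] ..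
    finally show ?case .
  qed
qed

lemma cheb_T_neg: "cheb_T n (-u) = (-1)^n * cheb_T n u"
proof -
  define s where "s = sqrt (u^2 - 1)"
  have e: "cheb_T n (-u) = ((-u + s)^n + (-u - s)^n)/2" unfolding cheb_T_def s_def by simp
  have c: "cheb_T n u = ((u + s)^n + (u - s)^n)/2" unfolding cheb_T_def s_def by simp
  have 1: "(-u + s)^n = (-1)^n * (u - s)^n" using power_minus[of "u - s" n] by simp
  have 2: "(-u - s)^n = (-1)^n * (u + s)^n" using power_minus[of "u + s" n] by simp
  show ?thesis unfolding e c 1 2 by (simp add: algebra_simps)
qed

lemma one_le_sq: "(u::real) \<ge> 1 \<Longrightarrow> 1 \<le> u^2"
  using mult_mono[of 1 u 1 u] by (simp add: power2_eq_square)

lemma sqrt_le_u: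
  assumes "u \<ge> 1" shows "sqrt (u^2 - 1) \<le> u"
proof -
  have "sqrt (u^2 - 1) \<le> sqrt (u^2)" by (rule real_sqrt_le_mono) simp
  also have "sqrt (u^2) = u" using assms by simp
  finally show ?thesis .
qed

lemma cheb_T_nonneg:
  assumes "u \<ge> 1" shows "0 \<le> cheb_T n u"
proof -
  have "0 \<le> sqrt (u^2 - 1)" using one_le_sq[OF assms] by simp
  then have "0 \<le> u + sqrt (u^2 - 1)" "0 \<le> u - sqrt (u^2 - 1)" using sqrt_le_u[OF assms] assms by linarith+
  then have "0 \<le> (u + sqrt (u^2 - 1))^n" "0 \<le> (u - sqrt (u^2 - 1))^n" by simp_all
  then show ?thesis unfolding cheb_T_def by simp
qed

lemma cheb_T_le:
  assumes "u \<ge> 1" shows "cheb_T n u \<le> (u + sqrt (u^2 - 1))^n"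
proof -
  have "(u - sqrt (u^2 - 1))^n \<le> (u + sqrt (u^2 - 1))^n"
    using sqrt_le_u[OF assms] one_le_sq[OF assms] by (intro power_mono) auto
  then show ?thesis unfolding cheb_T_def by simp
qed

lemma lag_sign:
  fixes x :: "nat \<Rightarrow> real"
  assumes dec: "\<And>i j. i < j \<Longrightarrow> j \<le> n \<Longrightarrow> x j < x i"
    and t: "\<And>j. j \<le> n \<Longrightarrow> t < x j" and i: "i \<le> n"
  shows "0 \<le> (-1)^(n-i) * poly (lag x n i) t"
proof -
  define f where "f j = (t - x j)/(x i - x j)" for j
  define g where "g j = (x j - t)/(x i - x j)" for j
  have split: "{..n}-{i} = {..<i} \<union> {i<..n}" using i by auto
  have p: "poly (lag x n i) t = (\<Prod>j\<in>{..<i}. f j) * (\<Prod>j\<in>{i<..n}. f j)"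
    unfolding poly_lag split f_def by (rule prod.union_disjoint) auto
  have p1: "0 < (\<Prod>j\<in>{..<i}. f j)"
  proof (rule prod_pos)
    fix j assume "j \<in> {..<i}"
    then have "x i < x j" "t < x j" using dec t i by auto
    then show "0 < f j" unfolding f_def by (intro divide_neg_neg) auto
  qed
  have p2: "0 < (\<Prod>j\<in>{i<..n}. g j)"
  proof (rule prod_pos)
    fix j assume "j \<in> {i<..n}"
    then have "x j < x i" "t < x j" using dec t i by auto
    then show "0 < g j" unfolding g_def by (intro divide_pos_pos) auto
  qed
  have "(\<Prod>j\<in>{i<..n}. f j) = (\<Prod>j\<in>{i<..n}. (-1) * g j)"
    by (rule prod.cong) (auto simp: f_def g_def field_simps)
  also have "\<dots> = (-1)^(n-i) * (\<Prod>j\<in>{i<..n}. g j)"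
    unfolding prod.distrib by simp
  finally have "(-1)^(n-i) * poly (lag x n i) t = ((-1)^(n-i) * (-1)^(n-i)) * ((\<Prod>j\<in>{..<i}. f j) * (\<Prod>j\<in>{i<..n}. g j))"
    unfolding p by (simp add: algebra_simps)
  also have "\<dots> = (\<Prod>j\<in>{..<i}. f j) * (\<Prod>j\<in>{i<..n}. g j)"
    by (simp add: power_mult_distrib[symmetric])
  finally show ?thesis using p1 p2 by simp
qed

lemma cheb_nodes_sum:
  fixes u :: real and n :: nat
  assumes "u > 1"
  defines "x \<equiv> \<lambda>i. cos (real i * pi / real n)"
  shows "(\<Sum>i\<le>n. \<bar>poly (lag x n i) (-u)\<bar>) = cheb_T n u"
proof -
  have dec: "x j < x i" if "i < j" "j \<le> n" for i j
  proof -
    have n: "real n > 0" using that by simp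
    have "real i * pi / real n < real j * pi / real n" using that n by (simp add: divide_strict_right_mono)
    moreover have "real j * pi / real n \<le> pi" using that n by (simp add: field_simps)
    moreover have "0 \<le> real i * pi / real n" by simp
    ultimately show ?thesis unfolding x_def by (rule cos_monotone_0_pi[rotated])
  qed
  have inj: "inj_on x {..n}"
  proof (rule inj_onI)
    fix i j assume "i \<in> {..n}" "j \<in> {..n}" "x i = x j"
    then show "i = j" using dec[of i j] dec[of j i] by (cases i j rule: linorder_cases) auto
  qed
  have t: "-u < x j" for j
  proof -
    have "-1 \<le> x j" unfolding x_def by simp
    then show ?thesis using assms(1) by linarith
  qed
  have nodes: "poly (chebp n) (x i) = (-1)^i" if "i \<le> n" for i
  proof (cases "n = 0")
    case True then show ?thesis using that by (simp add: x_def)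
  next
    case False
    have "poly (chebp n) (x i) = cos (real n * (real i * pi / real n))" unfolding x_def poly_chebp_cos ..
    also have "\<dots> = cos (real i * pi)" using False by simp
    finally show ?thesis by simp
  qed
  have "poly (chebp n) (-u) = poly (\<Sum>i\<le>n. smult (poly (chebp n) (x i)) (lag x n i)) (-u)"
    using lag_interp[OF inj degree_chebp] by (rule arg_cong)
  also have "\<dots> = (\<Sum>i\<le>n. poly (chebp n) (x i) * poly (lag x n i) (-u))"
    unfolding poly_sum poly_smult ..
  also have "\<dots> = (\<Sum>i\<le>n. (-1)^i * poly (lag x n i) (-u))"
    by (rule sum.cong[OF refl]) (simp add: nodes)
  finally have A: "poly (chebp n) (-u) = (\<Sum>i\<le>n. (-1)^i * poly (lag x n i) (-u))" .
  have B: "poly (chebp n) (-u) = (-1)^n * cheb_T n u"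
    using poly_chebp_closed[of "-u" n] one_le_sq[of u] assms(1) cheb_T_neg by simp
  have C: "\<bar>poly (lag x n i) (-u)\<bar> = (-1)^n * ((-1)^i * poly (lag x n i) (-u))" if "i \<le> n" for i
  proof -
    have s: "0 \<le> (-1)^(n-i) * poly (lag x n i) (-u)" by (rule lag_sign[OF dec t that]) auto
    have e: "(-1::real)^n * (-1)^i = (-1)^(n-i)"
    proof -
      have "(-1::real)^n = (-1)^(n-i) * (-1)^i" using that by (metis le_add_diff_inverse2 power_add)
      then show ?thesis by (simp add: mult.assoc)
    qed
    have "\<bar>poly (lag x n i) (-u)\<bar> = \<bar>(-1)^(n-i) * poly (lag x n i) (-u)\<bar>" by (simp add: abs_mult)
    also have "\<dots> = (-1)^(n-i) * poly (lag x n i) (-u)" using s by simp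
    finally show ?thesis using e by (simp add: mult.assoc[symmetric])
  qed
  have "(\<Sum>i\<le>n. \<bar>poly (lag x n i) (-u)\<bar>) = (\<Sum>i\<le>n. (-1)^n * ((-1)^i * poly (lag x n i) (-u)))"
    by (rule sum.cong[OF refl]) (simp add: C)
  also have "\<dots> = (-1)^n * poly (chebp n) (-u)" unfolding A by (rule sum_distrib_left[symmetric])
  also have "\<dots> = (-1)^n * ((-1)^n * cheb_T n u)" unfolding B ..
  also have "\<dots> = cheb_T n u" by simp
  finally show ?thesis .
qed

lemma recover:
  fixes y :: "nat \<Rightarrow> real" and a :: "nat \<Rightarrow> nat \<Rightarrow> real"
  assumes D: "\<And>k l. k \<le> n \<Longrightarrow> l \<le> n \<Longrightarrow> (\<Sum>i\<le>n. y i ^ k * a i l) = (if k = l then 1 else 0)"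
    and l: "l \<in> multi_idx m n"
  shows "c l = (\<Sum>g\<in>multi_idx m n. mpoly_eval m n c (restrict (\<lambda>j. y (g j)) {..<m})
                 * complex_of_real (\<Prod>j<m. a (g j) (l j)))"
proof -
  let ?I = "multi_idx m n"
  have fin: "finite ?I" unfolding multi_idx_def by (simp add: finite_PiE)
  have "(\<Sum>g\<in>?I. mpoly_eval m n c (restrict (\<lambda>j. y (g j)) {..<m}) * complex_of_real (\<Prod>j<m. a (g j) (l j)))
      = (\<Sum>g\<in>?I. \<Sum>k\<in>?I. c k * complex_of_real (\<Prod>j<m. y (g j) ^ k j * a (g j) (l j)))"
    unfolding mpoly_eval_def
    by (rule sum.cong[OF refl]) (simp add: sum_distrib_right prod.distrib mult.assoc)
  also have "\<dots> = (\<Sum>k\<in>?I. c k * complex_of_real (\<Sum>g\<in>?I. \<Prod>j<m. y (g j) ^ k j * a (g j) (l j)))"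
    by (subst sum.swap) (simp add: sum_distrib_left)
  also have "\<dots> = (\<Sum>k\<in>?I. c k * complex_of_real (\<Prod>j<m. \<Sum>i\<le>n. y i ^ k j * a i (l j)))"
    unfolding multi_idx_def by (subst prod_sum_PiE) auto
  also have "\<dots> = (\<Sum>k\<in>?I. c k * complex_of_real (\<Prod>j<m. if k j = l j then 1 else 0))"
  proof (rule sum.cong[OF refl])
    fix k assume k: "k \<in> ?I"
    have "(\<Prod>j<m. \<Sum>i\<le>n. y i ^ k j * a i (l j)) = (\<Prod>j<m. if k j = l j then 1 else 0)"
      proof (rule prod.cong[OF refl])
      fix j assume "j \<in> {..<m}"
      then have "k j \<le> n" "l j \<le> n" using k l unfolding multi_idx_def by (auto simp: PiE_iff)
      then show "(\<Sum>i\<le>n. y i ^ k j * a i (l j)) = (if k j = l j then 1 else 0)" by (rule D)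
    qed
    then show "c k * complex_of_real (\<Prod>j<m. \<Sum>i\<le>n. y i ^ k j * a i (l j)) =
               c k * complex_of_real (\<Prod>j<m. if k j = l j then 1 else 0)" by simp
  qed
  also have "\<dots> = (\<Sum>k\<in>?I. if k = l then c k else 0)"
  proof (rule sum.cong[OF refl])
    fix k assume k: "k \<in> ?I"
    have "(\<forall>j<m. k j = l j) \<longleftrightarrow> k = l"
      using k l unfolding multi_idx_def by (auto intro: PiE_ext)
    moreover have "(\<Prod>j<m. if k j = l j then 1 else 0::real) = (if \<forall>j<m. k j = l j then 1 else 0)"
      by (auto simp: prod_zero_iff)
    ultimately show "c k * complex_of_real (\<Prod>j<m. if k j = l j then 1 else 0) = (if k = l then c k else 0)"
      by simp
  qed
  also have "\<dots> = c l" using l fin by (simp add: sum.delta')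
  finally show ?thesis by simp
qed

lemma multi_bound:
  fixes y :: "nat \<Rightarrow> real" and a :: "nat \<Rightarrow> nat \<Rightarrow> real"
  assumes D: "\<And>k l. k \<le> n \<Longrightarrow> l \<le> n \<Longrightarrow> (\<Sum>i\<le>n. y i ^ k * a i l) = (if k = l then 1 else 0)"
    and M: "\<And>g. g \<in> multi_idx m n \<Longrightarrow> cmod (mpoly_eval m n c (restrict (\<lambda>j. y (g j)) {..<m})) \<le> M"
  shows "(\<Sum>k\<in>multi_idx m n. cmod (c k)) \<le> (\<Sum>i\<le>n. \<Sum>l\<le>n. \<bar>a i l\<bar>)^m * M"
proof -
  let ?I = "multi_idx m n"
  let ?U = "\<lambda>g. mpoly_eval m n c (restrict (\<lambda>j. y (g j)) {..<m})"
  have fin: "finite ?I" unfolding multi_idx_def by (simp add: finite_PiE)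
  have "(\<Sum>l\<in>?I. cmod (c l)) = (\<Sum>l\<in>?I. cmod (\<Sum>g\<in>?I. ?U g * complex_of_real (\<Prod>j<m. a (g j) (l j))))"
    by (rule sum.cong[OF refl]) (rule arg_cong[where f=cmod], rule recover[OF D])
  also have "\<dots> \<le> (\<Sum>l\<in>?I. \<Sum>g\<in>?I. M * (\<Prod>j<m. \<bar>a (g j) (l j)\<bar>))"
  proof (rule sum_mono)
    fix l assume "l \<in> ?I"
    have "cmod (\<Sum>g\<in>?I. ?U g * complex_of_real (\<Prod>j<m. a (g j) (l j)))
        \<le> (\<Sum>g\<in>?I. cmod (?U g * complex_of_real (\<Prod>j<m. a (g j) (l j))))" by (rule norm_sum)
    also have "\<dots> \<le> (\<Sum>g\<in>?I. M * (\<Prod>j<m. \<bar>a (g j) (l j)\<bar>))"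
    proof (rule sum_mono)
      fix g assume g: "g \<in> ?I"
      have "cmod (?U g * complex_of_real (\<Prod>j<m. a (g j) (l j))) = cmod (?U g) * (\<Prod>j<m. \<bar>a (g j) (l j)\<bar>)"
        by (simp add: norm_mult abs_prod prod_norm[symmetric])
      also have "\<dots> \<le> M * (\<Prod>j<m. \<bar>a (g j) (l j)\<bar>)"
        by (rule mult_right_mono[OF M[OF g]]) (simp add: prod_nonneg)
      finally show "cmod (?U g * complex_of_real (\<Prod>j<m. a (g j) (l j))) \<le> M * (\<Prod>j<m. \<bar>a (g j) (l j)\<bar>)" .
    qed
    finally show "cmod (\<Sum>g\<in>?I. ?U g * complex_of_real (\<Prod>j<m. a (g j) (l j))) \<le> (\<Sum>g\<in>?I. M * (\<Prod>j<m. \<bar>a (g j) (l j)\<bar>))" .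
  qed
  also have "\<dots> = M * (\<Sum>g\<in>?I. \<Sum>l\<in>?I. \<Prod>j<m. \<bar>a (g j) (l j)\<bar>)"
    by (subst sum.swap) (simp add: sum_distrib_left)
  also have "(\<Sum>g\<in>?I. \<Sum>l\<in>?I. \<Prod>j<m. \<bar>a (g j) (l j)\<bar>) = (\<Sum>g\<in>?I. \<Prod>j<m. \<Sum>i\<le>n. \<bar>a (g j) i\<bar>)"
    by (rule sum.cong[OF refl]) (unfold multi_idx_def, subst prod_sum_PiE, auto)
  also have "\<dots> = (\<Prod>j<m. \<Sum>i'\<le>n. \<Sum>i\<le>n. \<bar>a i' i\<bar>)"
    unfolding multi_idx_def by (subst prod_sum_PiE) auto
  also have "\<dots> = (\<Sum>i\<le>n. \<Sum>l\<le>n. \<bar>a i l\<bar>)^m" by simp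
  finally show ?thesis by (simp add: mult.commute)
qed

lemma nodes_dec:
  assumes "i < j" "j \<le> n"
  shows "cos (real j * pi / real n) < cos (real i * pi / real n)"
proof -
  have n: "real n > 0" using assms by simp
  have "real i * pi / real n < real j * pi / real n" using assms n by (simp add: divide_strict_right_mono)
  moreover have "real j * pi / real n \<le> pi" using assms n by (simp add: field_simps)
  moreover have "0 \<le> real i * pi / real n" by simp
  ultimately show ?thesis by (rule cos_monotone_0_pi[rotated])
qed

lemma cube_bound:
  assumes z: "z \<in> cube m A B" and A: "0 < A"
  shows "cmod (mpoly_eval m n c z) \<le> (\<Sum>k\<in>multi_idx m n. cmod (c k)) * (max 1 B ^ n) ^ m"
proof -
  have "cmod (mpoly_eval m n c z) \<le> (\<Sum>k\<in>multi_idx m n. cmod (c k * (\<Prod>j<m. complex_of_real (z j ^ k j))))"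
    unfolding mpoly_eval_def by (rule norm_sum)
  also have "\<dots> \<le> (\<Sum>k\<in>multi_idx m n. cmod (c k) * (max 1 B ^ n) ^ m)"
  proof (rule sum_mono)
    fix k assume k: "k \<in> multi_idx m n"
    have "(\<Prod>j<m. \<bar>z j ^ k j\<bar>) \<le> (\<Prod>j<m. max 1 B ^ n)"
    proof (rule prod_mono)
      fix j assume j: "j \<in> {..<m}"
      then have zj: "A \<le> z j" "z j \<le> B" and kj: "k j \<le> n" using z k unfolding cube_def multi_idx_def by (auto simp: PiE_iff)
      have "\<bar>z j ^ k j\<bar> = z j ^ k j" using zj A by simp
      also have "\<dots> \<le> max 1 B ^ k j" using zj A by (intro power_mono) auto
      also have "\<dots> \<le> max 1 B ^ n" using kj by (intro power_increasing) auto
      finally show "0 \<le> \<bar>z j ^ k j\<bar> \<and> \<bar>z j ^ k j\<bar> \<le> max 1 B ^ n" by simp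
    qed
    then have "cmod (\<Prod>j<m. complex_of_real (z j ^ k j)) \<le> (max 1 B ^ n) ^ m"
      by (simp add: prod_norm[symmetric] norm_power power_abs)
    then show "cmod (c k * (\<Prod>j<m. complex_of_real (z j ^ k j))) \<le> cmod (c k) * (max 1 B ^ n) ^ m"
      unfolding norm_mult by (rule mult_left_mono) simp
  qed
  also have "\<dots> = (\<Sum>k\<in>multi_idx m n. cmod (c k)) * (max 1 B ^ n) ^ m" by (simp add: sum_distrib_right)
  finally show ?thesis .
qed

lemma le_sup_norm:
  assumes "z \<in> cube m A B" "0 < A"
  shows "cmod (mpoly_eval m n c z) \<le> sup_norm (mpoly_eval m n c) (cube m A B)"
  unfolding sup_norm_def
proof (rule cSup_upper)
  show "cmod (mpoly_eval m n c z) \<in> (\<lambda>y. cmod (mpoly_eval m n c y)) ` cube m A B" using assms by simp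
  show "bdd_above ((\<lambda>y. cmod (mpoly_eval m n c y)) ` cube m A B)"
    using cube_bound[OF _ assms(2)] by (intro bdd_aboveI) blast
qed

lemma part_a:
  fixes A B :: real
  assumes AB: "0 < A" "A < B"
  shows "(\<Sum>k\<in>multi_idx m n. cmod (c k))
          \<le> (cheb_T n ((B + A + 2) / (B - A))) ^ m * sup_norm (mpoly_eval m n c) (cube m A B)"
proof -
  define x where "x = (\<lambda>i. cos (real i * pi / real n))"
  define h where "h = (B - A) / 2"
  define \<beta> where "\<beta> = (B + A) / 2"
  define y where "y = (\<lambda>i. h * x i + \<beta>)"
  define u where "u = (B + A + 2) / (B - A)"
  have h: "h > 0" using AB by (simp add: h_def)
  have u: "u > 1" using AB by (simp add: u_def field_simps)
  have hu: "h * u = 1 + \<beta>" using AB by (simp add: h_def u_def \<beta>_def field_simps)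
  have x1: "-1 \<le> x i" "x i \<le> 1" for i by (simp_all add: x_def)
  have yAB: "A \<le> y i \<and> y i \<le> B" for i
  proof -
    have "h * (-1) \<le> h * x i" "h * x i \<le> h * 1" using x1[of i] h by (intro mult_left_mono; simp)+
    then show ?thesis by (simp add: y_def h_def \<beta>_def field_simps)
  qed
  have injy: "inj_on y {..n}"
  proof (rule inj_onI)
    fix i j assume ij: "i \<in> {..n}" "j \<in> {..n}" "y i = y j"
    then have "x i = x j" using h by (simp add: y_def)
    then show "i = j" using ij nodes_dec[of i j n] nodes_dec[of j i n] unfolding x_def
      by (cases i j rule: linorder_cases) auto
  qed
  have D: "(\<Sum>i\<le>n. y i ^ k * coeff (lag y n i) l) = (if k = l then 1 else 0)" if "k \<le> n" "l \<le> n" for k l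
  proof -
    have "monom 1 k = (\<Sum>i\<le>n. smult (poly (monom 1 k) (y i)) (lag y n i))"
      by (rule lag_interp[OF injy]) (use that in \<open>simp add: degree_monom_eq\<close>)
    then have "coeff (monom 1 k) l = coeff (\<Sum>i\<le>n. smult (poly (monom 1 k) (y i)) (lag y n i)) l" by simp
    then show ?thesis by (simp add: coeff_sum poly_monom)
  qed
  have L: "(\<Sum>i\<le>n. \<Sum>l\<le>n. \<bar>coeff (lag y n i) l\<bar>) = cheb_T n u"
  proof -
    have "(\<Sum>i\<le>n. \<Sum>l\<le>n. \<bar>coeff (lag y n i) l\<bar>) = (\<Sum>i\<le>n. \<bar>poly (lag y n i) (-1)\<bar>)"
      by (rule sum.cong[OF refl], rule alt_lag) (use yAB AB in \<open>auto intro: less_imp_le[OF less_le_trans]\<close>)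
    also have "\<dots> = (\<Sum>i\<le>n. \<bar>poly (lag x n i) (-u)\<bar>)"
    proof (rule sum.cong[OF refl])
      fix i
      have "poly (lag y n i) (-1) = poly (lag x n i) (-u)"
        unfolding poly_lag
      proof (rule prod.cong[OF refl])
        fix j
        have "-1 - y j = h * (-u - x j)" "y i - y j = h * (x i - x j)"
          using hu by (simp_all add: y_def algebra_simps)
        then show "(-1 - y j) / (y i - y j) = (-u - x j) / (x i - x j)" using h by simp
      qed
      then show "\<bar>poly (lag y n i) (-1)\<bar> = \<bar>poly (lag x n i) (-u)\<bar>" by simp
    qed
    also have "\<dots> = cheb_T n u" unfolding x_def by (rule cheb_nodes_sum[OF u])
    finally show ?thesis .
  qed
  have M: "cmod (mpoly_eval m n c (restrict (\<lambda>j. y (g j)) {..<m})) \<le> sup_norm (mpoly_eval m n c) (cube m A B)"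
    if "g \<in> multi_idx m n" for g
    by (rule le_sup_norm[OF _ AB(1)]) (use yAB in \<open>auto simp: cube_def\<close>)
  show ?thesis using multi_bound[OF D M] L unfolding u_def by simp
qed

lemma sup_norm_nonneg:
  assumes "0 < A" "A \<le> B"
  shows "0 \<le> sup_norm (mpoly_eval m n c) (cube m A B)"
proof -
  have "restrict (\<lambda>_. A) {..<m} \<in> cube m A B" using assms by (auto simp: cube_def)
  from le_sup_norm[OF this assms(1)] show ?thesis by (meson norm_ge_zero order_trans)
qed

lemma ratio_aux:
  fixes p :: real assumes p: "p > 1"
  shows "(p + 1/p + 2) / (p - 1/p) = (p + 1) / (p - 1)"
proof -
  have 1: "p + 1/p + 2 = (p+1)*(p+1)/p" using p by (simp add: field_simps; simp add: algebra_simps)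
  have 2: "p - 1/p = (p-1)*(p+1)/p" using p by (simp add: field_simps; simp add: algebra_simps)
  have "(p + 1/p + 2) / (p - 1/p) = ((p+1)*(p+1)) / ((p-1)*(p+1))" unfolding 1 2 using p by simp
  also have "\<dots> = (p + 1) / (p - 1)" using p by simp
  finally show ?thesis .
qed

lemma sq_aux:
  fixes p :: real assumes p: "p > 1"
  shows "((p + 1) / (p - 1))^2 - 1 = (2 * sqrt p / (p - 1))^2"
proof -
  have "((p + 1) / (p - 1))^2 - 1 = ((p+1)^2 - (p-1)^2) / (p-1)^2" using p by (simp add: field_simps)
  also have "(p+1)^2 - (p-1)^2 = 4 * p" by (simp add: power2_eq_square algebra_simps)
  also have "4 * p = (2 * sqrt p)^2" using p by (simp add: power_mult_distrib)
  finally show ?thesis by (simp add: power_divide)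
qed

lemma coth_id:
  fixes b :: real
  assumes b: "0 < b"
  defines "u \<equiv> (exp b + exp (-b) + 2) / (exp b - exp (-b))"
  shows "u + sqrt (u^2 - 1) = (exp (b/4) + exp (-(b/4))) / (exp (b/4) - exp (-(b/4)))"
    and "u \<ge> 1"
proof -
  define q where "q = exp (b/4)"
  have q: "q > 1" using b by (simp add: q_def)
  have eb: "exp b = q^4" unfolding q_def using exp_of_nat_mult[of 4 "b/4"] by simp
  have emb: "exp (-b) = 1/q^4" using eb by (simp add: exp_minus field_simps)
  have emq: "exp (-(b/4)) = 1/q" by (simp add: q_def exp_minus field_simps)
  have q4: "q^4 > 1" using q by (simp add: one_less_power)
  have q2: "q^2 > 1" using q by (simp add: one_less_power)
  have uq: "u = (q^4 + 1) / (q^4 - 1)" unfolding u_def eb emb using ratio_aux[OF q4] by simp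
  have sq: "sqrt (q^4) = q^2" using q by (simp add: real_sqrt_eq_iff power_mult[symmetric] real_sqrt_unique)
  have "u^2 - 1 = (2 * q^2 / (q^4 - 1))^2" unfolding uq using sq_aux[OF q4] sq by simp
  then have s: "sqrt (u^2 - 1) = 2 * q^2 / (q^4 - 1)" using q4 by simp
  have q4f: "q^4 - 1 = (q^2 - 1) * (q^2 + 1)" by (simp add: algebra_simps power2_eq_square flip: power_add; simp add: eval_nat_numeral)
  have "u + sqrt (u^2 - 1) = (q^4 + 1) / (q^4 - 1) + 2 * q^2 / (q^4 - 1)" unfolding s unfolding uq ..
  also have "\<dots> = (q^4 + 2 * q^2 + 1) / (q^4 - 1)" by (simp add: add_divide_distrib)
  also have "q^4 + 2 * q^2 + 1 = (q^2 + 1) * (q^2 + 1)"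
    by (simp add: algebra_simps power2_eq_square flip: power_add; simp add: eval_nat_numeral)
  also have "((q^2 + 1) * (q^2 + 1)) / (q^4 - 1) = ((q^2 + 1) * (q^2 + 1)) / ((q^2 - 1) * (q^2 + 1))"
    unfolding q4f ..
  also have "\<dots> = (q^2 + 1)/(q^2 - 1)" using q2 by simp
  also have "\<dots> = (exp (b/4) + exp (-(b/4))) / (exp (b/4) - exp (-(b/4)))"
  proof -
    have a: "q + 1/q = (q^2 + 1)/q" "q - 1/q = (q^2 - 1)/q" using q by (simp_all add: field_simps power2_eq_square)
    show ?thesis unfolding emq q_def[symmetric] a using q by simp
  qed
  finally show "u + sqrt (u^2 - 1) = (exp (b/4) + exp (-(b/4))) / (exp (b/4) - exp (-(b/4)))" .
  show "u \<ge> 1" unfolding uq using q4 by simp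
qed

theorem lemmaL2p6:
  fixes m n :: nat and c :: "(nat \<Rightarrow> nat) \<Rightarrow> complex"
  shows "(\<forall>A B :: real. 0 < A \<and> A < B \<longrightarrow>
            (\<Sum>k\<in>multi_idx m n. cmod (c k))
              \<le> (cheb_T n ((B + A + 2) / (B - A))) ^ m
                 * sup_norm (mpoly_eval m n c) (cube m A B))
       \<and> (\<forall>b :: real. 0 < b \<longrightarrow>
            (\<Sum>k\<in>multi_idx m n. cmod (c k))
              \<le> ((exp (b/4) + exp (-(b/4))) / (exp (b/4) - exp (-(b/4)))) ^ (m * n)
                 * sup_norm (mpoly_eval m n c) (cube m (exp (-b)) (exp b)))"
proof (intro conjI allI impI)
  fix A B :: real assume "0 < A \<and> A < B"
  then show "(\<Sum>k\<in>multi_idx m n. cmod (c k))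
              \<le> (cheb_T n ((B + A + 2) / (B - A))) ^ m
                 * sup_norm (mpoly_eval m n c) (cube m A B)" using part_a by blast
next
  fix b :: real assume b: "0 < b"
  define u where "u = (exp b + exp (-b) + 2) / (exp b - exp (-b))"
  define Q where "Q = (exp (b/4) + exp (-(b/4))) / (exp (b/4) - exp (-(b/4)))"
  have AB: "0 < exp (-b)" "exp (-b) < exp b" using b by auto
  have u1: "u \<ge> 1" and uQ: "u + sqrt (u^2 - 1) = Q" using coth_id[OF b] by (simp_all add: u_def Q_def)
  have S: "0 \<le> sup_norm (mpoly_eval m n c) (cube m (exp (-b)) (exp b))"
    using sup_norm_nonneg AB by (simp add: less_imp_le)
  have "(\<Sum>k\<in>multi_idx m n. cmod (c k)) \<le> (cheb_T n u) ^ m * sup_norm (mpoly_eval m n c) (cube m (exp (-b)) (exp b))"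
    using part_a[OF AB] by (simp add: u_def add.commute add.left_commute)
  also have "\<dots> \<le> (Q ^ n) ^ m * sup_norm (mpoly_eval m n c) (cube m (exp (-b)) (exp b))"
    using cheb_T_le[OF u1, of n] cheb_T_nonneg[OF u1, of n] uQ S
    by (intro mult_right_mono power_mono) auto
  also have "(Q ^ n) ^ m = Q ^ (m * n)" by (simp add: power_mult[symmetric] mult.commute)
  finally show "(\<Sum>k\<in>multi_idx m n. cmod (c k))
              \<le> ((exp (b/4) + exp (-(b/4))) / (exp (b/4) - exp (-(b/4)))) ^ (m * n)
                 * sup_norm (mpoly_eval m n c) (cube m (exp (-b)) (exp b))" unfolding Q_def .
qed

end
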